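(* Let $\Sigma$ be a finite set of formulas closed under subformulas. Then for every $\Gamma\in W_c$ and $\varphi\in\Sigma$, $(\mathcal M^{\mathsf{CS4}}_\Sigma,\Gamma)\models\varphi$ iff $\varphi\in\Gamma^+$; consequently, for $\varphi\in\Sigma$, $\mathsf{CS4}\vdash\varphi$ iff $\mathcal M^{\mathsf{CS4}}_\Sigma\models\varphi$.
   Context: Formulas over a countably infinite set $\mathbb P$: $p\mid\bot\mid\varphi\wedge\psi\mid\varphi\vee\psi\mid\varphi\to\psi\mid\Diamond\varphi\mid\Box\varphi$; $\mathcal L$ is the set of all formulas. Satisfaction in a structure $(W,W_\bot,\preccurlyeq,\sqsubseteq,V)$: $p$ iff $w\in V(p)$; $\bot$ iff $w\in W_\bot$; $\wedge,\vee$ pointwise; $w\models\varphi\to\psi$ iff for all $v\succcurlyeq w$, $v\models\varphi$ implies $v\models\psi$; $w\models\Diamond\varphi$ iff for all $u\succcurlyeq w$ there is $v\sqsupseteq u$ with $v\models\varphi$; $w\models\Box\varphi$ iff $v\models\varphi$ whenever $w\preccurlyeq u\sqsubseteq v$; $\mathcal M\models\varphi$ iff $\varphi$ holds at every $w\in W\setminus W_\bot$. $\mathsf{CS4}$ is the least set of formulas containing all intuitionistic propositional tautologies and all instances of $\Box(\varphi\to\psi)\to(\Box\varphi\to\Box\psi)$, $\Box(\varphi\to\psi)\to(\Diamond\varphi\to\Diamond\psi)$, $\Box\varphi\to\varphi$, $\varphi\to\Diamond\varphi$, $\Box\varphi\to\Box\Box\varphi$, $\Diamond\Diamond\varphi\to\Diamond\varphi$,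 closed under modus ponens and necessitation. $\Gamma\vdash\Delta$ means $\mathsf{CS4}\vdash\bigwedge\Gamma'\to\bigvee\Delta'$ for finite $\Gamma'\subseteq\Gamma$, $\Delta'\subseteq\Delta$. A set $X$ is prime if $X\vdash\varphi$ implies $\varphi\in X$ and $\varphi\vee\psi\in X$ implies $\varphi\in X$ or $\psi\in X$. A $\mathsf{CS4}$-theory is a pair $\Phi=(\Phi^+;\Phi^\Diamond)$ with $\Phi^+$ prime and $\Diamond\bigvee\Psi\notin\Phi^+$ for every nonempty finite $\Psi\subseteq\Phi^\Diamond$. $\Phi^\Box=\{\varphi:\Box\varphi\in\Phi^+\}$. $W_c$ = all $\mathsf{CS4}$-theories; $W_{\bot c}=\{(\mathcal L;\varnothing)\}$; $\Phi\preccurlyeq_c\Psi$ iff $\Phi^+\subseteq\Psi^+$; $\Phi\sqsubseteq_c\Psi$ iff $\Phi^\Box\subseteq\Psi^+$ and $\Phi^\Diamond\subseteq\Psi^\Diamond$; $V_c(p)=\{\Phi:p\in\Phi^+\}$. For $\Gamma,\Delta\in W_c$, $\Gamma\preccurlyeq_\Sigma\Delta$ iff $\Gamma\preccurlyeq_c\Delta$ and either $\Gamma^+=\Delta^+$ or there is $\chi\in\Sigma$ with $\chi\in\Delta^+\setminus\Gamma^+$. $\mathcal M^{\mathsf{CS4}}_\Sigma=(W_c,W_{\bot c},\preccurlyeq_\Sigma,\sqsubseteq_c,V_c)$. *)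

theory Defs
  imports Main
begin

datatype form =
    Atom nat
  | Bot
  | And form form
  | Or form form
  | Imp form form
  | Dia form
  | Box form

fun subformulas :: "form \<Rightarrow> form set" where
  "subformulas (Atom p) = {Atom p}"
| "subformulas Bot = {Bot}"
| "subformulas (And a b) = insert (And a b) (subformulas a \<union> subformulas b)"
| "subformulas (Or a b) = insert (Or a b) (subformulas a \<union> subformulas b)"
| "subformulas (Imp a b) = insert (Imp a b) (subformulas a \<union> subformulas b)"
| "subformulas (Dia a) = insert (Dia a) (subformulas a)"
| "subformulas (Box a) = insert (Box a) (subformulas a)"

definition subformula_closed :: "form set \<Rightarrow> bool" where
  "subformula_closed S \<longleftrightarrow> (\<forall>\<phi>\<in>S. subformulas \<phi> \<subseteq> S)"

definition Top :: form where "Top = Imp Bot Bot"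

fun conj_list :: "form list \<Rightarrow> form" where
  "conj_list [] = Top"
| "conj_list [x] = x"
| "conj_list (x # xs) = And x (conj_list xs)"

fun disj_list :: "form list \<Rightarrow> form" where
  "disj_list [] = Bot"
| "disj_list [x] = x"
| "disj_list (x # xs) = Or x (disj_list xs)"

text \<open>Axiom schemes of intuitionistic propositional logic (Hilbert style), instantiated
  over the whole modal language; together with modus ponens they generate exactly
  the substitution instances of intuitionistic propositional tautologies.\<close>
inductive ipc_axiom :: "form \<Rightarrow> bool" where
  "ipc_axiom (Imp a (Imp b a))"
| "ipc_axiom (Imp (Imp a (Imp b c)) (Imp (Imp a b) (Imp a c)))"
| "ipc_axiom (Imp (And a b) a)"
| "ipc_axiom (Imp (And a b) b)"
| "ipc_axiom (Imp a (Imp b (And a b)))"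
| "ipc_axiom (Imp a (Or a b))"
| "ipc_axiom (Imp b (Or a b))"
| "ipc_axiom (Imp (Imp a c) (Imp (Imp b c) (Imp (Or a b) c)))"
| "ipc_axiom (Imp Bot a)"

inductive CS4 :: "form \<Rightarrow> bool" where
  ipc: "ipc_axiom a \<Longrightarrow> CS4 a"
| K_box: "CS4 (Imp (Box (Imp a b)) (Imp (Box a) (Box b)))"
| K_dia: "CS4 (Imp (Box (Imp a b)) (Imp (Dia a) (Dia b)))"
| T_box: "CS4 (Imp (Box a) a)"
| T_dia: "CS4 (Imp a (Dia a))"
| four_box: "CS4 (Imp (Box a) (Box (Box a)))"
| four_dia: "CS4 (Imp (Dia (Dia a)) (Dia a))"
| MP: "CS4 (Imp a b) \<Longrightarrow> CS4 a \<Longrightarrow> CS4 b"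
| Nec: "CS4 a \<Longrightarrow> CS4 (Box a)"

definition derives :: "form set \<Rightarrow> form set \<Rightarrow> bool" where
  "derives G D \<longleftrightarrow> (\<exists>gs ds. set gs \<subseteq> G \<and> set ds \<subseteq> D \<and> CS4 (Imp (conj_list gs) (disj_list ds)))"

definition prime_set :: "form set \<Rightarrow> bool" where
  "prime_set X \<longleftrightarrow> (\<forall>\<phi>. derives X {\<phi>} \<longrightarrow> \<phi> \<in> X) \<and>
                    (\<forall>\<phi> \<psi>. Or \<phi> \<psi> \<in> X \<longrightarrow> \<phi> \<in> X \<or> \<psi> \<in> X)"

type_synonym cs4_theory = "form set \<times> form set"

definition is_theory :: "cs4_theory \<Rightarrow> bool" where
  "is_theory \<Phi> \<longleftrightarrow> prime_set (fst \<Phi>) \<and>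
     (\<forall>ds. ds \<noteq> [] \<longrightarrow> set ds \<subseteq> snd \<Phi> \<longrightarrow> Dia (disj_list ds) \<notin> fst \<Phi>)"

definition box_part :: "cs4_theory \<Rightarrow> form set" where
  "box_part \<Phi> = {\<phi>. Box \<phi> \<in> fst \<Phi>}"

record 'w model =
  worlds :: "'w set"
  fallible :: "'w set"
  pre :: "'w \<Rightarrow> 'w \<Rightarrow> bool"
  mrel :: "'w \<Rightarrow> 'w \<Rightarrow> bool"
  val :: "nat \<Rightarrow> 'w set"

fun sat :: "'w model \<Rightarrow> 'w \<Rightarrow> form \<Rightarrow> bool" where
  "sat M w (Atom p) \<longleftrightarrow> w \<in> val M p"
| "sat M w Bot \<longleftrightarrow> w \<in> fallible M"
| "sat M w (And a b) \<longleftrightarrow> sat M w a \<and> sat M w b"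
| "sat M w (Or a b) \<longleftrightarrow> sat M w a \<or> sat M w b"
| "sat M w (Imp a b) \<longleftrightarrow> (\<forall>v\<in>worlds M. pre M w v \<longrightarrow> sat M v a \<longrightarrow> sat M v b)"
| "sat M w (Dia a) \<longleftrightarrow> (\<forall>u\<in>worlds M. pre M w u \<longrightarrow> (\<exists>v\<in>worlds M. mrel M u v \<and> sat M v a))"
| "sat M w (Box a) \<longleftrightarrow> (\<forall>u\<in>worlds M. \<forall>v\<in>worlds M. pre M w u \<longrightarrow> mrel M u v \<longrightarrow> sat M v a)"

definition valid :: "'w model \<Rightarrow> form \<Rightarrow> bool" where
  "valid M \<phi> \<longleftrightarrow> (\<forall>w \<in> worlds M - fallible M. sat M w \<phi>)"

definition Wc :: "cs4_theory set" where
  "Wc = {\<Phi>. is_theory \<Phi>}"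

definition Wbot_c :: "cs4_theory set" where
  "Wbot_c = {(UNIV, {})}"

definition sq_c :: "cs4_theory \<Rightarrow> cs4_theory \<Rightarrow> bool" where
  "sq_c \<Phi> \<Psi> \<longleftrightarrow> box_part \<Phi> \<subseteq> fst \<Psi> \<and> snd \<Phi> \<subseteq> snd \<Psi>"

definition V_c :: "nat \<Rightarrow> cs4_theory set" where
  "V_c p = {\<Phi>. Atom p \<in> fst \<Phi>}"

definition pre_Sigma :: "form set \<Rightarrow> cs4_theory \<Rightarrow> cs4_theory \<Rightarrow> bool" where
  "pre_Sigma S \<Gamma> \<Delta> \<longleftrightarrow> \<Gamma> \<in> Wc \<and> \<Delta> \<in> Wc \<and> fst \<Gamma> \<subseteq> fst \<Delta> \<and>
     (fst \<Gamma> = fst \<Delta> \<or> (\<exists>\<chi>\<in>S. \<chi> \<in> fst \<Delta> - fst \<Gamma>))"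

definition M_Sigma :: "form set \<Rightarrow> cs4_theory model" where
  "M_Sigma S = \<lparr>worlds = Wc, fallible = Wbot_c, pre = pre_Sigma S, mrel = sq_c, val = V_c\<rparr>"

end

theory Submission
  imports Defs
begin


inductive ded :: "form set \<Rightarrow> form \<Rightarrow> bool" for H where
  hyp: "a \<in> H \<Longrightarrow> ded H a"
| thm_ax: "CS4 a \<Longrightarrow> ded H a"
| mp: "ded H (Imp a b) \<Longrightarrow> ded H a \<Longrightarrow> ded H b"

lemma ax: "ipc_axiom a \<Longrightarrow> ded H a" by (intro ded.thm_ax CS4.ipc)

lemma CS4_id: "CS4 (Imp a a)"
proof -
  have 1: "CS4 (Imp (Imp a (Imp (Imp a a) a)) (Imp (Imp a (Imp a a)) (Imp a a)))"
    by (intro CS4.ipc ipc_axiom.intros)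
  have 2: "CS4 (Imp a (Imp (Imp a a) a))" by (intro CS4.ipc ipc_axiom.intros)
  have 3: "CS4 (Imp a (Imp a a))" by (intro CS4.ipc ipc_axiom.intros)
  show ?thesis using CS4.MP[OF CS4.MP[OF 1 2] 3] .
qed

lemma ded_mono: "ded H b \<Longrightarrow> H \<subseteq> H' \<Longrightarrow> ded H' b"
  by (induction rule: ded.induct) (auto intro: ded.intros)

lemma deduction: "ded (insert a H) b \<Longrightarrow> ded H (Imp a b)"
proof (induction rule: ded.induct)
  case (hyp x)
  then show ?case
  proof
    assume "x = a" thus ?thesis using CS4_id ded.thm_ax by blast
  next
    assume "x \<in> H"
    thus ?thesis using ded.mp[OF ax[of "Imp x (Imp a x)"] ded.hyp] by (auto intro: ipc_axiom.intros)
  qed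
next
  case (thm_ax x)
  then show ?case using ded.mp[OF ax[of "Imp x (Imp a x)"] ded.thm_ax] by (auto intro: ipc_axiom.intros)
next
  case (mp x y)
  have "ded H (Imp (Imp a (Imp x y)) (Imp (Imp a x) (Imp a y)))" by (intro ax ipc_axiom.intros)
  then show ?case using mp ded.mp by blast
qed

lemma ded_empty: "ded {} a \<Longrightarrow> CS4 a"
  by (induction rule: ded.induct) (auto intro: CS4.MP)

lemma cut: "ded H a \<Longrightarrow> ded (insert a H) b \<Longrightarrow> ded H b"
  using deduction ded.mp by blast

lemma subst_ded: "ded H b \<Longrightarrow> (\<forall>h\<in>H. ded H' h) \<Longrightarrow> ded H' b"
  by (induction rule: ded.induct) (auto intro: ded.intros)

lemma compact: "ded H b \<Longrightarrow> \<exists>F. finite F \<and> F \<subseteq> H \<and> ded F b"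
proof (induction rule: ded.induct)
  case (hyp a) thus ?case by (intro exI[of _ "{a}"]) (auto intro: ded.hyp)
next
  case (thm_ax a) thus ?case by (intro exI[of _ "{}"]) (auto intro: ded.thm_ax)
next
  case (mp a b)
  then obtain F1 F2 where "finite F1" "F1 \<subseteq> H" "ded F1 (Imp a b)" "finite F2" "F2 \<subseteq> H" "ded F2 a" by blast
  thus ?case by (intro exI[of _ "F1 \<union> F2"]) (auto intro: ded.mp ded_mono)
qed

lemma and_I: "ded H a \<Longrightarrow> ded H b \<Longrightarrow> ded H (And a b)"
  by (meson ax ded.mp ipc_axiom.intros(5))
lemma and_E1: "ded H (And a b) \<Longrightarrow> ded H a"
  by (meson ax ded.mp ipc_axiom.intros(3))
lemma and_E2: "ded H (And a b) \<Longrightarrow> ded H b"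
  by (meson ax ded.mp ipc_axiom.intros(4))
lemma or_I1: "ded H a \<Longrightarrow> ded H (Or a b)"
  by (meson ax ded.mp ipc_axiom.intros(6))
lemma or_I2: "ded H b \<Longrightarrow> ded H (Or a b)"
  by (meson ax ded.mp ipc_axiom.intros(7))
lemma or_E: "ded H (Or a b) \<Longrightarrow> ded (insert a H) c \<Longrightarrow> ded (insert b H) c \<Longrightarrow> ded H c"
  by (meson ax ded.mp deduction ipc_axiom.intros(8))
lemma bot_E: "ded H Bot \<Longrightarrow> ded H c"
  by (meson ax ded.mp ipc_axiom.intros(9))

lemma conj_E: "ded H (conj_list gs) \<Longrightarrow> g \<in> set gs \<Longrightarrow> ded H g"
proof (induction gs rule: conj_list.induct)
  case (3 x y xs)
  have a: "ded H (And x (conj_list (y # xs)))" using 3(2) by simp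
  show ?case
  proof (cases "g = x")
    case True thus ?thesis using and_E1[OF a] by simp
  next
    case False thus ?thesis using 3(1)[OF and_E2[OF a]] 3(3) by simp
  qed
qed auto

lemma conj_I: "(\<forall>g\<in>set gs. ded H g) \<Longrightarrow> ded H (conj_list gs)"
proof (induction gs rule: conj_list.induct)
  case 1 show ?case unfolding Top_def conj_list.simps by (intro ax ipc_axiom.intros)
next
  case (3 x y xs) thus ?case by (simp add: and_I)
qed auto

lemma disj_I: "d \<in> set ds \<Longrightarrow> ded H d \<Longrightarrow> ded H (disj_list ds)"
proof (induction ds rule: disj_list.induct)
  case (3 x y xs)
  show ?case
  proof (cases "d = x")
    case True thus ?thesis using 3 or_I1 by simp
  next
    case False thus ?thesis using 3 or_I2 by simp
  qed
qed auto

lemma disj_E: "ded H (disj_list ds) \<Longrightarrow> (\<And>d. d \<in> set ds \<Longrightarrow> ded (insert d H) c) \<Longrightarrow> ded H c"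
proof (induction ds arbitrary: H rule: disj_list.induct)
  case 1 thus ?case by (simp add: bot_E)
next
  case (2 x) thus ?case using cut by simp
next
  case (3 x y xs)
  let ?H' = "insert (disj_list (y # xs)) H"
  have "ded ?H' c"
    by (rule "3.IH") (auto intro: ded.hyp "3.prems"(2)[THEN ded_mono])
  then show ?case using 3 or_E by simp
qed

lemma disj_mono: "set ds1 \<subseteq> set ds2 \<Longrightarrow> ded H (disj_list ds1) \<Longrightarrow> ded H (disj_list ds2)"
  by (erule disj_E) (auto intro: disj_I ded.hyp)

lemma ded_iff: "ded X \<phi> \<longleftrightarrow> (\<exists>gs. set gs \<subseteq> X \<and> CS4 (Imp (conj_list gs) \<phi>))"
proof
  assume "ded X \<phi>"
  then obtain F where F: "finite F" "F \<subseteq> X" "ded F \<phi>" using compact by blast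
  then obtain gs where gs: "set gs = F" using finite_list by blast
  have "ded {conj_list gs} \<phi>"
    using subst_ded[OF F(3)] gs conj_E[OF ded.hyp] by blast
  hence "ded {} (Imp (conj_list gs) \<phi>)" by (rule deduction)
  thus "\<exists>gs. set gs \<subseteq> X \<and> CS4 (Imp (conj_list gs) \<phi>)" using gs F ded_empty by blast
next
  assume "\<exists>gs. set gs \<subseteq> X \<and> CS4 (Imp (conj_list gs) \<phi>)"
  then obtain gs where "set gs \<subseteq> X" "CS4 (Imp (conj_list gs) \<phi>)" by blast
  thus "ded X \<phi>" by (meson conj_I ded.hyp ded.mp ded.thm_ax subsetD)
qed

lemma prime_closed: "prime_set X \<Longrightarrow> ded X \<phi> \<Longrightarrow> \<phi> \<in> X"
proof -
  assume p: "prime_set X" and d: "ded X \<phi>"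
  then obtain gs where "set gs \<subseteq> X" "CS4 (Imp (conj_list gs) \<phi>)" using ded_iff by blast
  hence "derives X {\<phi>}" unfolding derives_def
    by (intro exI[of _ gs] exI[of _ "[\<phi>]"]) simp
  thus ?thesis using p unfolding prime_set_def by blast
qed

definition cons :: "form set \<Rightarrow> form set \<Rightarrow> bool" where
  "cons X Y \<longleftrightarrow> \<not> (\<exists>ds. set ds \<subseteq> Y \<and> ded X (disj_list ds))"

lemma lindenbaum:
  assumes "cons X Y"
  shows "\<exists>Z. X \<subseteq> Z \<and> cons Z Y \<and> prime_set Z"
proof -
  define A where "A = {Z. X \<subseteq> Z \<and> cons Z Y}"
  have "\<forall>C\<in>chains A. \<exists>U\<in>A. \<forall>Z\<in>C. Z \<subseteq> U"
  proof
    fix C assume C: "C \<in> chains A"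
    show "\<exists>U\<in>A. \<forall>Z\<in>C. Z \<subseteq> U"
    proof (cases "C = {}")
      case True
      have "X \<in> A" using assms unfolding A_def by blast
      thus ?thesis using True by blast
    next
      case False
      have sub: "C \<subseteq> A" using C unfolding chains_def by blast
      have ch: "subset.chain A C" using C by (simp add: chains_alt_def)
      have "cons (\<Union>C) Y"
        unfolding cons_def
      proof
        assume "\<exists>ds. set ds \<subseteq> Y \<and> ded (\<Union>C) (disj_list ds)"
        then obtain ds where ds: "set ds \<subseteq> Y" "ded (\<Union>C) (disj_list ds)" by blast
        obtain F where F: "finite F" "F \<subseteq> \<Union>C" "ded F (disj_list ds)" using compact[OF ds(2)] by blast
        then obtain B where "B \<in> C" "F \<subseteq> B" using finite_subset_Union_chain[OF F(1,2) False ch] by blast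
        hence d: "ded B (disj_list ds)" using ded_mono[OF F(3)] by blast
        have "cons B Y" using \<open>B \<in> C\<close> sub unfolding A_def by blast
        thus False using ds(1) d unfolding cons_def by blast
      qed
      moreover have "X \<subseteq> \<Union>C" using False sub unfolding A_def by blast
      ultimately have "\<Union>C \<in> A" unfolding A_def by blast
      thus ?thesis by blast
    qed
  qed
  from Zorn_Lemma2[OF this] obtain M where M: "M \<in> A" "\<forall>Z\<in>A. M \<subseteq> Z \<longrightarrow> Z = M"
    by blast
  have XM: "X \<subseteq> M" and cM: "cons M Y" using M(1) unfolding A_def by blast+
  have ext: "\<phi> \<notin> M \<Longrightarrow> \<exists>ds. set ds \<subseteq> Y \<and> ded (insert \<phi> M) (disj_list ds)" for \<phi>
  proof (rule ccontr)
    assume "\<phi> \<notin> M" "\<nexists>ds. set ds \<subseteq> Y \<and> ded (insert \<phi> M) (disj_list ds)"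
    hence "cons (insert \<phi> M) Y" unfolding cons_def by blast
    hence "insert \<phi> M \<in> A" using XM unfolding A_def by blast
    hence "insert \<phi> M = M" using M(2) by blast
    thus False using \<open>\<phi> \<notin> M\<close> by blast
  qed
  have closed: "ded M \<phi> \<Longrightarrow> \<phi> \<in> M" for \<phi>
  proof (rule ccontr)
    assume d: "ded M \<phi>" "\<phi> \<notin> M"
    then obtain ds where "set ds \<subseteq> Y" "ded (insert \<phi> M) (disj_list ds)" using ext by blast
    moreover have "ded M (disj_list ds)" using cut[OF d(1) calculation(2)] .
    ultimately show False using cM unfolding cons_def by blast
  qed
  have orp: "Or \<phi> \<psi> \<in> M \<Longrightarrow> \<phi> \<in> M \<or> \<psi> \<in> M" for \<phi> \<psi>
  proof (rule ccontr)
    assume o: "Or \<phi> \<psi> \<in> M" "\<not> (\<phi> \<in> M \<or> \<psi> \<in> M)"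
    then obtain ds1 ds2 where d: "set ds1 \<subseteq> Y" "ded (insert \<phi> M) (disj_list ds1)"
       "set ds2 \<subseteq> Y" "ded (insert \<psi> M) (disj_list ds2)" using ext by blast
    have "ded (insert \<phi> M) (disj_list (ds1 @ ds2))" "ded (insert \<psi> M) (disj_list (ds1 @ ds2))"
      using disj_mono[OF _ d(2), of "ds1 @ ds2"] disj_mono[OF _ d(4), of "ds1 @ ds2"] by auto
    hence "ded M (disj_list (ds1 @ ds2))" by (rule or_E[OF ded.hyp[OF o(1)]])
    moreover have "set (ds1 @ ds2) \<subseteq> Y" using d by simp
    ultimately show False using cM unfolding cons_def by blast
  qed
  have "prime_set M"
    unfolding prime_set_def
  proof (intro conjI allI impI)
    fix \<phi> assume "derives M {\<phi>}"
    then obtain gs ds where g: "set gs \<subseteq> M" "set ds \<subseteq> {\<phi>}" "CS4 (Imp (conj_list gs) (disj_list ds))"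
      unfolding derives_def by blast
    hence "ded M (disj_list ds)" using ded_iff by blast
    hence "ded M \<phi>" by (rule disj_E) (use g(2) in \<open>auto intro: ded.hyp\<close>)
    thus "\<phi> \<in> M" by (rule closed)
  next
    fix \<phi> \<psi> assume "Or \<phi> \<psi> \<in> M" thus "\<phi> \<in> M \<or> \<psi> \<in> M" by (rule orp)
  qed
  thus ?thesis using XM cM by blast
qed



lemma box_lift: "ded H a \<Longrightarrow> ded (Box ` H) (Box a)"
proof (induction rule: ded.induct)
  case (hyp a) thus ?case by (intro ded.hyp) blast
next
  case (thm_ax a) thus ?case by (intro ded.thm_ax CS4.Nec)
next
  case (mp a b)
  have "ded (Box ` H) (Imp (Box (Imp a b)) (Imp (Box a) (Box b)))" by (intro ded.thm_ax CS4.K_box)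
  thus ?case using mp ded.mp by blast
qed

lemma CS4_imp: "ded {a} b \<Longrightarrow> CS4 (Imp a b)"
  by (rule ded_empty, rule deduction) simp

lemma ded_dia: "ded H (Dia a) \<Longrightarrow> CS4 (Imp a b) \<Longrightarrow> ded H (Dia b)"
proof -
  assume d: "ded H (Dia a)" and i: "CS4 (Imp a b)"
  have "ded H (Imp (Box (Imp a b)) (Imp (Dia a) (Dia b)))" by (intro ded.thm_ax CS4.K_dia)
  moreover have "ded H (Box (Imp a b))" using i by (intro ded.thm_ax CS4.Nec)
  ultimately show ?thesis using d ded.mp by blast
qed

lemma disj_imp: "set X \<subseteq> set Y \<Longrightarrow> CS4 (Imp (disj_list X) (disj_list Y))"
  by (rule CS4_imp, rule disj_mono) (auto intro: ded.hyp)

lemma theory_prime: "\<Gamma> \<in> Wc \<Longrightarrow> prime_set (fst \<Gamma>)"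
  by (simp add: Wc_def is_theory_def)

lemma theory_dia: "\<Gamma> \<in> Wc \<Longrightarrow> ds \<noteq> [] \<Longrightarrow> set ds \<subseteq> snd \<Gamma> \<Longrightarrow> Dia (disj_list ds) \<notin> fst \<Gamma>"
  by (simp add: Wc_def is_theory_def)

lemma mem: "\<Gamma> \<in> Wc \<Longrightarrow> ded (fst \<Gamma>) \<phi> \<Longrightarrow> \<phi> \<in> fst \<Gamma>"
  using prime_closed theory_prime by blast

lemma prime_UNIV: "prime_set UNIV"
  by (simp add: prime_set_def)

lemma univ_W: "(UNIV, {}) \<in> Wc"
  by (simp add: Wc_def is_theory_def prime_UNIV)

lemma empty_W: "prime_set Z \<Longrightarrow> (Z, {}) \<in> Wc"
  by (simp add: Wc_def is_theory_def)

lemma self_sub: "\<phi> \<in> subformulas \<phi>"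
  by (cases \<phi>) auto

lemma M_simps: "worlds (M_Sigma S) = Wc" "fallible (M_Sigma S) = Wbot_c"
  "pre (M_Sigma S) = pre_Sigma S" "mrel (M_Sigma S) = sq_c" "val (M_Sigma S) = V_c"
  by (simp_all add: M_Sigma_def)

lemma cons_single: "\<not> ded X b \<Longrightarrow> cons X {b}"
  unfolding cons_def
proof
  assume n: "\<not> ded X b" and "\<exists>ds. set ds \<subseteq> {b} \<and> ded X (disj_list ds)"
  then obtain ds where "set ds \<subseteq> {b}" "ded X (disj_list ds)" by blast
  hence "ded X b" by (elim disj_E) (auto intro: ded.hyp)
  thus False using n by blast
qed

lemma cons_not: "cons Z Y \<Longrightarrow> y \<in> Y \<Longrightarrow> y \<notin> Z"
  unfolding cons_def
proof
  assume c: "\<not> (\<exists>ds. set ds \<subseteq> Y \<and> ded Z (disj_list ds))" and y: "y \<in> Y" "y \<in> Z"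
  have "set [y] \<subseteq> Y \<and> ded Z (disj_list [y])" using y by (simp add: ded.hyp)
  thus False using c by blast
qed



lemma bot_case:
  assumes G: "\<Gamma> \<in> Wc"
  shows "\<Gamma> \<in> Wbot_c \<longleftrightarrow> Bot \<in> fst \<Gamma>"
proof
  assume "\<Gamma> \<in> Wbot_c" thus "Bot \<in> fst \<Gamma>" by (simp add: Wbot_c_def)
next
  assume b: "Bot \<in> fst \<Gamma>"
  have u: "fst \<Gamma> = UNIV"
  proof (rule set_eqI)
    fix x show "x \<in> fst \<Gamma> \<longleftrightarrow> x \<in> UNIV"
      using mem[OF G bot_E[OF ded.hyp[OF b]]] by simp
  qed
  have s: "snd \<Gamma> = {}"
  proof (rule ccontr)
    assume "snd \<Gamma> \<noteq> {}"
    then obtain x where "x \<in> snd \<Gamma>" by blast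
    hence "Dia (disj_list [x]) \<notin> fst \<Gamma>" using theory_dia[OF G, of "[x]"] by simp
    thus False using u by simp
  qed
  show "\<Gamma> \<in> Wbot_c" using u s by (simp add: Wbot_c_def prod_eq_iff)
qed

lemma imp_case:
  assumes G: "\<Gamma> \<in> Wc" and aS: "a \<in> S"
  shows "(\<forall>\<Delta>\<in>Wc. pre_Sigma S \<Gamma> \<Delta> \<longrightarrow> a \<in> fst \<Delta> \<longrightarrow> b \<in> fst \<Delta>) \<longleftrightarrow> Imp a b \<in> fst \<Gamma>"
proof
  assume i: "Imp a b \<in> fst \<Gamma>"
  show "\<forall>\<Delta>\<in>Wc. pre_Sigma S \<Gamma> \<Delta> \<longrightarrow> a \<in> fst \<Delta> \<longrightarrow> b \<in> fst \<Delta>"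
  proof (intro ballI impI)
    fix \<Delta> assume D: "\<Delta> \<in> Wc" "pre_Sigma S \<Gamma> \<Delta>" "a \<in> fst \<Delta>"
    hence "Imp a b \<in> fst \<Delta>" using i by (auto simp: pre_Sigma_def)
    thus "b \<in> fst \<Delta>" using mem[OF D(1) ded.mp[OF ded.hyp ded.hyp]] D(3) by blast
  qed
next
  assume R: "\<forall>\<Delta>\<in>Wc. pre_Sigma S \<Gamma> \<Delta> \<longrightarrow> a \<in> fst \<Delta> \<longrightarrow> b \<in> fst \<Delta>"
  show "Imp a b \<in> fst \<Gamma>"
  proof (rule ccontr)
    assume n: "Imp a b \<notin> fst \<Gamma>"
    have nd: "\<not> ded (insert a (fst \<Gamma>)) b"
      using n mem[OF G deduction] by blast
    show False
    proof (cases "a \<in> fst \<Gamma>")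
      case True
      have "pre_Sigma S \<Gamma> \<Gamma>" using G by (simp add: pre_Sigma_def)
      hence "b \<in> fst \<Gamma>" using R G True by blast
      hence "ded (insert a (fst \<Gamma>)) b" by (simp add: ded.hyp)
      thus False using nd by blast
    next
      case False
      obtain Z where Z: "insert a (fst \<Gamma>) \<subseteq> Z" "cons Z {b}" "prime_set Z"
        using lindenbaum[OF cons_single[OF nd]] by blast
      have ZW: "(Z, {}) \<in> Wc" using empty_W[OF Z(3)] .
      have "pre_Sigma S \<Gamma> (Z, {})" unfolding pre_Sigma_def
        using G ZW Z(1) False aS by auto
      hence "b \<in> Z" using R ZW Z(1) by auto
      thus False using cons_not[OF Z(2)] by blast
    qed
  qed
qed

lemma box_case:
  assumes G: "\<Gamma> \<in> Wc"
  shows "(\<forall>\<Delta>\<in>Wc. \<forall>\<Theta>\<in>Wc. pre_Sigma S \<Gamma> \<Delta> \<longrightarrow> sq_c \<Delta> \<Theta> \<longrightarrow> a \<in> fst \<Theta>) \<longleftrightarrow> Box a \<in> fst \<Gamma>"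
proof
  assume i: "Box a \<in> fst \<Gamma>"
  show "\<forall>\<Delta>\<in>Wc. \<forall>\<Theta>\<in>Wc. pre_Sigma S \<Gamma> \<Delta> \<longrightarrow> sq_c \<Delta> \<Theta> \<longrightarrow> a \<in> fst \<Theta>"
    using i by (auto simp: pre_Sigma_def sq_c_def box_part_def)
next
  assume R: "\<forall>\<Delta>\<in>Wc. \<forall>\<Theta>\<in>Wc. pre_Sigma S \<Gamma> \<Delta> \<longrightarrow> sq_c \<Delta> \<Theta> \<longrightarrow> a \<in> fst \<Theta>"
  show "Box a \<in> fst \<Gamma>"
  proof (rule ccontr)
    assume n: "Box a \<notin> fst \<Gamma>"
    have nd: "\<not> ded (box_part \<Gamma>) a"
    proof
      assume "ded (box_part \<Gamma>) a"
      hence "ded (Box ` box_part \<Gamma>) (Box a)" by (rule box_lift)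
      hence "ded (fst \<Gamma>) (Box a)" by (rule ded_mono) (auto simp: box_part_def)
      thus False using n mem[OF G] by blast
    qed
    obtain Z where Z: "box_part \<Gamma> \<subseteq> Z" "cons Z {a}" "prime_set Z"
      using lindenbaum[OF cons_single[OF nd]] by blast
    have ZW: "(Z, {}) \<in> Wc" using empty_W[OF Z(3)] .
    have DW: "(fst \<Gamma>, {}) \<in> Wc" using empty_W[OF theory_prime[OF G]] .
    have "pre_Sigma S \<Gamma> (fst \<Gamma>, {})" using G DW by (simp add: pre_Sigma_def)
    moreover have "sq_c (fst \<Gamma>, {}) (Z, {})" using Z(1) by (simp add: sq_c_def box_part_def)
    ultimately have "a \<in> Z" using R ZW DW by fastforce
    thus False using cons_not[OF Z(2)] by blast
  qed
qed



lemma CS4_trans: "CS4 (Imp a b) \<Longrightarrow> CS4 (Imp b c) \<Longrightarrow> CS4 (Imp a c)"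
  by (rule CS4_imp) (meson ded.hyp ded.mp ded.thm_ax singletonI)

lemma dia_imp: "set X \<subseteq> set Y \<Longrightarrow> CS4 (Imp (Dia (disj_list X)) (Dia (disj_list Y)))"
  by (rule CS4_imp, rule ded_dia[OF ded.hyp disj_imp]) auto

lemma collect_D:
  assumes "d0 \<in> P"
  shows "set es \<subseteq> {Dia (disj_list ds) | ds. ds \<noteq> [] \<and> set ds \<subseteq> P} \<Longrightarrow>
    \<exists>D. D \<noteq> [] \<and> set D \<subseteq> P \<and> (\<forall>e\<in>set es. CS4 (Imp e (Dia (disj_list D))))"
proof (induction es)
  case Nil thus ?case using assms by (intro exI[of _ "[d0]"]) simp
next
  case (Cons e es)
  then obtain D' where D': "D' \<noteq> []" "set D' \<subseteq> P" "\<forall>e\<in>set es. CS4 (Imp e (Dia (disj_list D')))"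
    by auto
  obtain ds where ds: "e = Dia (disj_list ds)" "set ds \<subseteq> P" using Cons.prems by auto
  have "\<forall>e'\<in>set (e # es). CS4 (Imp e' (Dia (disj_list (ds @ D'))))"
  proof
    fix e' assume "e' \<in> set (e # es)"
    then consider "e' = e" | "e' \<in> set es" by auto
    thus "CS4 (Imp e' (Dia (disj_list (ds @ D'))))"
    proof cases
      case 1 thus ?thesis using ds dia_imp[of ds "ds @ D'"] by simp
    next
      case 2 thus ?thesis using D'(3) CS4_trans dia_imp[of D' "ds @ D'"] by auto
    qed
  qed
  thus ?case using D' ds by (intro exI[of _ "ds @ D'"]) auto
qed

lemma dia_witness:
  assumes D: "\<Delta> \<in> Wc" and da: "Dia a \<in> fst \<Delta>"
  shows "\<exists>\<Theta>\<in>Wc. sq_c \<Delta> \<Theta> \<and> a \<in> fst \<Theta>"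
proof (cases "snd \<Delta> = {}")
  case True
  thus ?thesis using univ_W by (intro bexI[of _ "(UNIV, {})"]) (auto simp: sq_c_def)
next
  case False
  then obtain d0 where d0: "d0 \<in> snd \<Delta>" by blast
  define Y where "Y = {Dia (disj_list ds) | ds. ds \<noteq> [] \<and> set ds \<subseteq> snd \<Delta>}"
  have c: "cons (insert a (box_part \<Delta>)) Y"
    unfolding cons_def
  proof
    assume "\<exists>es. set es \<subseteq> Y \<and> ded (insert a (box_part \<Delta>)) (disj_list es)"
    then obtain es where es: "set es \<subseteq> Y" "ded (insert a (box_part \<Delta>)) (disj_list es)" by blast
    obtain DD where DD: "DD \<noteq> []" "set DD \<subseteq> snd \<Delta>" "\<forall>e\<in>set es. CS4 (Imp e (Dia (disj_list DD)))"
      using collect_D[OF d0 es(1)[unfolded Y_def]] by blast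
    have "ded (insert a (box_part \<Delta>)) (Dia (disj_list DD))"
      using es(2)
    proof (rule disj_E)
      fix e assume "e \<in> set es"
      thus "ded (insert e (insert a (box_part \<Delta>))) (Dia (disj_list DD))"
        using DD(3) by (meson ded.hyp ded.mp ded.thm_ax insertI1)
    qed
    hence "ded (box_part \<Delta>) (Imp a (Dia (disj_list DD)))" by (rule deduction)
    hence "ded (Box ` box_part \<Delta>) (Box (Imp a (Dia (disj_list DD))))" by (rule box_lift)
    hence b: "ded (fst \<Delta>) (Box (Imp a (Dia (disj_list DD))))"
      by (rule ded_mono) (auto simp: box_part_def)
    have "ded (fst \<Delta>) (Imp (Box (Imp a (Dia (disj_list DD)))) (Imp (Dia a) (Dia (Dia (disj_list DD)))))"
      by (intro ded.thm_ax CS4.K_dia)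
    hence "ded (fst \<Delta>) (Dia (Dia (disj_list DD)))" using b ded.mp ded.hyp[OF da] by blast
    moreover have "ded (fst \<Delta>) (Imp (Dia (Dia (disj_list DD))) (Dia (disj_list DD)))"
      by (intro ded.thm_ax CS4.four_dia)
    ultimately have "Dia (disj_list DD) \<in> fst \<Delta>" using mem[OF D] ded.mp by blast
    thus False using theory_dia[OF D DD(1,2)] by blast
  qed
  obtain Z where Z: "insert a (box_part \<Delta>) \<subseteq> Z" "cons Z Y" "prime_set Z"
    using lindenbaum[OF c] by blast
  have "(Z, snd \<Delta>) \<in> Wc"
    unfolding Wc_def is_theory_def
  proof (simp add: Z(3), intro allI impI)
    fix ds assume "ds \<noteq> []" "set ds \<subseteq> snd \<Delta>"
    hence "Dia (disj_list ds) \<in> Y" unfolding Y_def by blast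
    thus "Dia (disj_list ds) \<notin> Z" using cons_not[OF Z(2)] by blast
  qed
  moreover have "sq_c \<Delta> (Z, snd \<Delta>)" using Z(1) by (simp add: sq_c_def)
  ultimately show ?thesis using Z(1) by (intro bexI[of _ "(Z, snd \<Delta>)"]) auto
qed

lemma dia_case:
  assumes G: "\<Gamma> \<in> Wc"
  shows "(\<forall>\<Delta>\<in>Wc. pre_Sigma S \<Gamma> \<Delta> \<longrightarrow> (\<exists>\<Theta>\<in>Wc. sq_c \<Delta> \<Theta> \<and> a \<in> fst \<Theta>)) \<longleftrightarrow> Dia a \<in> fst \<Gamma>"
proof
  assume "Dia a \<in> fst \<Gamma>"
  thus "\<forall>\<Delta>\<in>Wc. pre_Sigma S \<Gamma> \<Delta> \<longrightarrow> (\<exists>\<Theta>\<in>Wc. sq_c \<Delta> \<Theta> \<and> a \<in> fst \<Theta>)"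
    using dia_witness by (auto simp: pre_Sigma_def)
next
  assume R: "\<forall>\<Delta>\<in>Wc. pre_Sigma S \<Gamma> \<Delta> \<longrightarrow> (\<exists>\<Theta>\<in>Wc. sq_c \<Delta> \<Theta> \<and> a \<in> fst \<Theta>)"
  show "Dia a \<in> fst \<Gamma>"
  proof (rule ccontr)
    assume n: "Dia a \<notin> fst \<Gamma>"
    have DW: "(fst \<Gamma>, {a}) \<in> Wc"
      unfolding Wc_def is_theory_def
    proof (simp add: theory_prime[OF G], intro allI impI)
      fix ds assume "ds \<noteq> []" "set ds \<subseteq> {a}"
      show "Dia (disj_list ds) \<notin> fst \<Gamma>"
      proof
        assume "Dia (disj_list ds) \<in> fst \<Gamma>"
        hence "ded (fst \<Gamma>) (Dia (disj_list [a]))"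
          using ded_dia[OF ded.hyp disj_imp[of ds "[a]"]] \<open>set ds \<subseteq> {a}\<close> by simp
        thus False using n mem[OF G] by simp
      qed
    qed
    have "pre_Sigma S \<Gamma> (fst \<Gamma>, {a})" using G DW by (simp add: pre_Sigma_def)
    then obtain \<Theta> where T: "\<Theta> \<in> Wc" "sq_c (fst \<Gamma>, {a}) \<Theta>" "a \<in> fst \<Theta>" using R DW by blast
    have "a \<in> snd \<Theta>" using T(2) by (simp add: sq_c_def)
    have "ded (fst \<Theta>) (Dia a)" using T(3) by (meson ded.hyp ded.mp ded.thm_ax CS4.T_dia)
    hence "Dia (disj_list [a]) \<in> fst \<Theta>" using mem[OF T(1)] by simp
    thus False using theory_dia[OF T(1), of "[a]"] \<open>a \<in> snd \<Theta>\<close> by simp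
  qed
qed



lemma truth:
  assumes sc: "subformula_closed S"
  shows "\<phi> \<in> S \<Longrightarrow> \<Gamma> \<in> Wc \<Longrightarrow> sat (M_Sigma S) \<Gamma> \<phi> \<longleftrightarrow> \<phi> \<in> fst \<Gamma>"
proof (induction \<phi> arbitrary: \<Gamma>)
  have sub: "\<And>x y. x \<in> S \<Longrightarrow> y \<in> subformulas x \<Longrightarrow> y \<in> S"
    using sc unfolding subformula_closed_def by blast
  {
  case (Atom p) thus ?case by (simp add: M_simps V_c_def)
  next
  case Bot thus ?case using bot_case by (simp add: M_simps)
  next
  case (And a b)
  have "a \<in> S" "b \<in> S" using sub[OF And.prems(1)] self_sub by auto
  hence "sat (M_Sigma S) \<Gamma> (And a b) \<longleftrightarrow> a \<in> fst \<Gamma> \<and> b \<in> fst \<Gamma>" using And by simp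
  also have "\<dots> \<longleftrightarrow> And a b \<in> fst \<Gamma>"
    using mem[OF And.prems(2)] and_I and_E1 and_E2 ded.hyp by meson
  finally show ?case .
  next
  case (Or a b)
  have "a \<in> S" "b \<in> S" using sub[OF Or.prems(1)] self_sub by auto
  hence "sat (M_Sigma S) \<Gamma> (Or a b) \<longleftrightarrow> a \<in> fst \<Gamma> \<or> b \<in> fst \<Gamma>" using Or by simp
  also have "\<dots> \<longleftrightarrow> Or a b \<in> fst \<Gamma>"
    using mem[OF Or.prems(2)] or_I1 or_I2 ded.hyp theory_prime[OF Or.prems(2)]
    unfolding prime_set_def by meson
  finally show ?case .
  next
  case (Imp a b)
  have S: "a \<in> S" "b \<in> S" using sub[OF Imp.prems(1)] self_sub by auto
  have "sat (M_Sigma S) \<Gamma> (Imp a b) \<longleftrightarrow>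
      (\<forall>\<Delta>\<in>Wc. pre_Sigma S \<Gamma> \<Delta> \<longrightarrow> a \<in> fst \<Delta> \<longrightarrow> b \<in> fst \<Delta>)"
    using Imp.IH S by (simp add: M_simps)
  also have "\<dots> \<longleftrightarrow> Imp a b \<in> fst \<Gamma>" by (rule imp_case[OF Imp.prems(2) S(1)])
  finally show ?case .
  next
  case (Box a)
  have S: "a \<in> S" using sub[OF Box.prems(1)] self_sub by auto
  have "sat (M_Sigma S) \<Gamma> (Box a) \<longleftrightarrow>
      (\<forall>\<Delta>\<in>Wc. \<forall>\<Theta>\<in>Wc. pre_Sigma S \<Gamma> \<Delta> \<longrightarrow> sq_c \<Delta> \<Theta> \<longrightarrow> a \<in> fst \<Theta>)"
    using Box.IH S by (simp add: M_simps)
  also have "\<dots> \<longleftrightarrow> Box a \<in> fst \<Gamma>" by (rule box_case[OF Box.prems(2)])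
  finally show ?case .
  next
  case (Dia a)
  have S: "a \<in> S" using sub[OF Dia.prems(1)] self_sub by auto
  have "sat (M_Sigma S) \<Gamma> (Dia a) \<longleftrightarrow>
      (\<forall>\<Delta>\<in>Wc. pre_Sigma S \<Gamma> \<Delta> \<longrightarrow> (\<exists>\<Theta>\<in>Wc. sq_c \<Delta> \<Theta> \<and> a \<in> fst \<Theta>))"
    using Dia.IH S by (simp add: M_simps)
  also have "\<dots> \<longleftrightarrow> Dia a \<in> fst \<Gamma>" by (rule dia_case[OF Dia.prems(2)])
  finally show ?case .
  }
qed

theorem mainTheorem19:
  assumes "finite S" and "subformula_closed S"
  shows "(\<forall>\<Gamma>\<in>Wc. \<forall>\<phi>\<in>S. sat (M_Sigma S) \<Gamma> \<phi> \<longleftrightarrow> \<phi> \<in> fst \<Gamma>)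
       \<and> (\<forall>\<phi>\<in>S. CS4 \<phi> \<longleftrightarrow> valid (M_Sigma S) \<phi>)"
proof (intro conjI ballI)
  fix \<Gamma> \<phi> assume "\<Gamma> \<in> Wc" "\<phi> \<in> S"
  thus "sat (M_Sigma S) \<Gamma> \<phi> \<longleftrightarrow> \<phi> \<in> fst \<Gamma>" using truth[OF assms(2)] by blast
next
  fix \<phi> assume p: "\<phi> \<in> S"
  show "CS4 \<phi> \<longleftrightarrow> valid (M_Sigma S) \<phi>"
  proof
    assume c: "CS4 \<phi>"
    show "valid (M_Sigma S) \<phi>" unfolding valid_def M_simps
    proof
      fix w assume "w \<in> Wc - Wbot_c"
      hence w: "w \<in> Wc" by blast
      have "\<phi> \<in> fst w" using mem[OF w ded.thm_ax[OF c]] .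
      thus "sat (M_Sigma S) w \<phi>" using truth[OF assms(2) p w] by blast
    qed
  next
    assume v: "valid (M_Sigma S) \<phi>"
    show "CS4 \<phi>"
    proof (rule ccontr)
      assume n: "\<not> CS4 \<phi>"
      have "\<not> ded {} \<phi>" using n ded_empty by blast
      then obtain Z where Z: "cons Z {\<phi>}" "prime_set Z"
        using lindenbaum[OF cons_single] by blast
      have ZW: "(Z, {}) \<in> Wc" by (rule empty_W[OF Z(2)])
      have nz: "\<phi> \<notin> Z" using cons_not[OF Z(1)] by blast
      hence "(Z, {}) \<notin> Wbot_c" by (auto simp: Wbot_c_def)
      hence "sat (M_Sigma S) (Z, {}) \<phi>" using v ZW unfolding valid_def M_simps by blast
      hence "\<phi> \<in> Z" using truth[OF assms(2) p ZW] by simp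
      thus False using nz by blast
    qed
  qed
qed

end
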